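(* For every integer $k\ge 1$, let $B_k$ be the graph with vertex set $\{b^i_j \mid i,j\in\{1,\ldots,k\}\}$ in which $b^i_j$ and $b^{i'}_{j'}$ are adjacent if and only if $i\ne i'$ and $j\ne j'$ (i.e. $B_k$ is the complement of the Cartesian product $K_k\square K_k$). Let $\alpha^k$ and $\beta^k$ be the $k$-colorings of $B_k$ given by $\alpha^k(b^i_j)=i$ and $\beta^k(b^i_j)=j$. Then (1) every recoloring sequence from $\alpha^k$ to $\beta^k$ contains a coloring that uses at least $2k-1$ different colors; and (2) there exists a $(2k-1)$-recoloring sequence from $\alpha^k$ to $\beta^k$ of length at most $2k^2$.
   Context: A $k$-coloring of a graph $G$ is a map $V(G)\to\{1,\ldots,k\}$ with adjacent vertices receiving different colors. The set of colors used by a coloring $\gamma$ is $\{\gamma(v)\mid v\in V(G)\}$. The $k$-color graph $\mathcal{C}_k(G)$ has the $k$-colorings of $G$ as vertices, two being adjacent iff they differ on exactly one vertex. A $k$-recoloring sequence from $\alpha$ to $\beta$ of length $m$ is a sequence $\alpha=\alpha_0,\ldots,\alpha_m=\beta$ of $k$-colorings such that for each $i$, either $\alpha_i=\alpha_{i+1}$ or $\alpha_i,\alpha_{i+1}$ are adjacent in $\mathcal{C}_k(G)$. A recoloring sequence is a $k$-recoloring sequence for some integer $k$. *)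

theory Defs
  imports Main
begin

text \<open>A graph is given by a vertex set V and a symmetric irreflexive adjacency
  relation E. A colouring is a function on vertices; only its values on V matter.\<close>

definition is_kcoloring :: "'v set \<Rightarrow> ('v \<Rightarrow> 'v \<Rightarrow> bool) \<Rightarrow> nat \<Rightarrow> ('v \<Rightarrow> nat) \<Rightarrow> bool" where
  "is_kcoloring V E k c \<longleftrightarrow>
     (\<forall>v\<in>V. c v \<in> {1..k}) \<and> (\<forall>u\<in>V. \<forall>v\<in>V. E u v \<longrightarrow> c u \<noteq> c v)"

definition same_coloring :: "'v set \<Rightarrow> ('v \<Rightarrow> nat) \<Rightarrow> ('v \<Rightarrow> nat) \<Rightarrow> bool" where
  "same_coloring V f g \<longleftrightarrow> (\<forall>v\<in>V. f v = g v)"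

definition differ_on_one :: "'v set \<Rightarrow> ('v \<Rightarrow> nat) \<Rightarrow> ('v \<Rightarrow> nat) \<Rightarrow> bool" where
  "differ_on_one V f g \<longleftrightarrow> (\<exists>!v. v \<in> V \<and> f v \<noteq> g v)"

text \<open>A k-recolouring sequence alpha = xs!0, ..., xs!m = beta; its length is m = length xs - 1.\<close>
definition recoloring_seq ::
  "'v set \<Rightarrow> ('v \<Rightarrow> 'v \<Rightarrow> bool) \<Rightarrow> nat \<Rightarrow> ('v \<Rightarrow> nat) \<Rightarrow> ('v \<Rightarrow> nat) \<Rightarrow> ('v \<Rightarrow> nat) list \<Rightarrow> bool" where
  "recoloring_seq V E k \<alpha> \<beta> xs \<longleftrightarrow>
     xs \<noteq> [] \<and> (\<forall>c\<in>set xs. is_kcoloring V E k c) \<and>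
     same_coloring V (hd xs) \<alpha> \<and> same_coloring V (last xs) \<beta> \<and>
     (\<forall>i. Suc i < length xs \<longrightarrow>
        same_coloring V (xs ! i) (xs ! Suc i) \<or> differ_on_one V (xs ! i) (xs ! Suc i))"

definition colors_used :: "'v set \<Rightarrow> ('v \<Rightarrow> nat) \<Rightarrow> nat" where
  "colors_used V c = card (c ` V)"

text \<open>The graph B_k: vertex b^i_j is the pair (i,j).\<close>
definition B_V :: "nat \<Rightarrow> (nat \<times> nat) set" where
  "B_V k = {1..k} \<times> {1..k}"

definition B_E :: "nat \<times> nat \<Rightarrow> nat \<times> nat \<Rightarrow> bool" where
  "B_E u v \<longleftrightarrow> fst u \<noteq> fst v \<and> snd u \<noteq> snd v"

definition alphaB :: "nat \<times> nat \<Rightarrow> nat" where "alphaB b = fst b"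
definition betaB :: "nat \<times> nat \<Rightarrow> nat" where "betaB b = snd b"

end

theory Submission
  imports Defs
begin

lemma sameclass:
  assumes "is_kcoloring (B_V k) B_E K c" "a \<in> {1..k}" "b\<in>{1..k}" "a'\<in>{1..k}" "b' \<in> {1..k}"
    "c (a,b) = c (a',b')"
  shows "a = a' \<or> b = b'"
  using assms unfolding is_kcoloring_def B_V_def B_E_def by force

definition hrow :: "nat \<Rightarrow> (nat\<times>nat \<Rightarrow> nat) \<Rightarrow> nat \<Rightarrow> bool" where
  "hrow k c i \<longleftrightarrow> (\<exists>j1\<in>{1..k}. \<exists>j2\<in>{1..k}. j1 \<noteq> j2 \<and> c (i,j1) = c (i,j2))"
definition vcol :: "nat \<Rightarrow> (nat\<times>nat \<Rightarrow> nat) \<Rightarrow> nat \<Rightarrow> bool" where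
  "vcol k c j \<longleftrightarrow> (\<exists>i1\<in>{1..k}. \<exists>i2\<in>{1..k}. i1 \<noteq> i2 \<and> c (i1,j) = c (i2,j))"

lemma L2:
  assumes col: "is_kcoloring (B_V k) B_E K c" and i0: "i0 \<in> {1..k}" and j0: "j0 \<in> {1..k}"
   and nh: "\<not> hrow k c i0" and nv: "\<not> vcol k c j0"
  shows "card (c ` B_V k) \<ge> 2*k - 1"
proof -
  let ?R = "(\<lambda>j. c (i0,j)) ` {1..k}"
  let ?C = "(\<lambda>i. c (i,j0)) ` ({1..k} - {i0})"
  have inR: "inj_on (\<lambda>j. c (i0,j)) {1..k}"
  proof (rule inj_onI)
    fix x y assume x: "x \<in> {1..k}" and y: "y \<in> {1..k}" and eq: "c (i0,x) = c (i0,y)"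
    show "x = y"
    proof (rule ccontr)
      assume "x \<noteq> y"
      then have "hrow k c i0" unfolding hrow_def using x y eq by blast
      with nh show False by simp
    qed
  qed
  have inC: "inj_on (\<lambda>i. c (i,j0)) ({1..k} - {i0})"
  proof (rule inj_onI)
    fix x y assume x: "x \<in> {1..k} - {i0}" and y: "y \<in> {1..k} - {i0}" and eq: "c (x,j0) = c (y,j0)"
    show "x = y"
    proof (rule ccontr)
      assume "x \<noteq> y"
      moreover have "x \<in> {1..k}" "y \<in> {1..k}" using x y by auto
      ultimately have "vcol k c j0" unfolding vcol_def using eq by blast
      with nv show False by simp
    qed
  qed
  have cR: "card ?R = k" using card_image[OF inR] by simp
  have cC: "card ?C = k - 1" using card_image[OF inC] i0 by simp
  have disj: "?R \<inter> ?C = {}"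
  proof (rule ccontr)
    assume "?R \<inter> ?C \<noteq> {}"
    then obtain x where x: "x \<in> ?R" "x \<in> ?C" by blast
    from x(1) obtain j where j: "j \<in> {1..k}" and xj: "x = c (i0,j)" by (rule imageE)
    from x(2) obtain i where i': "i \<in> {1..k} - {i0}" and xi: "x = c (i,j0)" by (rule imageE)
    have i: "i \<in> {1..k}" "i \<noteq> i0" using i' by auto
    have eq: "c (i0,j) = c (i,j0)" using xj xi by simp
    from sameclass[OF col i0 j i(1) j0 eq] i have "j = j0" by simp
    then have e2: "c (i0,j0) = c (i,j0)" using eq by simp
    have "vcol k c j0" unfolding vcol_def
      by (rule bexI[of _ i0], rule bexI[of _ i]) (use e2 i i0 in auto)
    with nv show False by simp
  qed
  have sub: "?R \<union> ?C \<subseteq> c ` B_V k" using i0 j0 by (auto simp: B_V_def)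
  have fin: "finite (c ` B_V k)" by (simp add: B_V_def)
  have "card (?R \<union> ?C) = k + (k-1)" using card_Un_disjoint[of ?R ?C] disj cR cC by simp
  then have "k + (k-1) \<le> card (c ` B_V k)" using card_mono[OF fin sub] by simp
  then show ?thesis by simp
qed

lemma L1:
  assumes col: "is_kcoloring (B_V k) B_E K c" and q: "q \<in> {1..k}"
   and H: "\<forall>i\<in>{1..k}. hrow k c i" and Vc: "\<forall>j\<in>{1..k}. j \<noteq> q \<longrightarrow> vcol k c j"
  shows "card (c ` B_V k) \<ge> 2*k - 1"
proof -
  define h where "h i = (SOME x. \<exists>j1\<in>{1..k}. \<exists>j2\<in>{1..k}. j1 \<noteq> j2 \<and> c (i,j1) = x \<and> c (i,j2) = x)" for i
  define w where "w j = (SOME x. \<exists>i1\<in>{1..k}. \<exists>i2\<in>{1..k}. i1 \<noteq> i2 \<and> c (i1,j) = x \<and> c (i2,j) = x)" for j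
  have h: "\<exists>j1\<in>{1..k}. \<exists>j2\<in>{1..k}. j1 \<noteq> j2 \<and> c (i,j1) = h i \<and> c (i,j2) = h i" if "i \<in> {1..k}" for i
  proof -
    from H that obtain j1 j2 where "j1\<in>{1..k}" "j2\<in>{1..k}" "j1\<noteq>j2" "c(i,j1) = c(i,j2)"
      unfolding hrow_def by blast
    then have "\<exists>x. \<exists>j1\<in>{1..k}. \<exists>j2\<in>{1..k}. j1 \<noteq> j2 \<and> c (i,j1) = x \<and> c (i,j2) = x" by blast
    then show ?thesis unfolding h_def by (rule someI_ex)
  qed
  have w: "\<exists>i1\<in>{1..k}. \<exists>i2\<in>{1..k}. i1 \<noteq> i2 \<and> c (i1,j) = w j \<and> c (i2,j) = w j"
    if "j \<in> {1..k}" "j \<noteq> q" for j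
  proof -
    from Vc that obtain i1 i2 where "i1\<in>{1..k}" "i2\<in>{1..k}" "i1\<noteq>i2" "c(i1,j) = c(i2,j)"
      unfolding vcol_def by blast
    then have "\<exists>x. \<exists>i1\<in>{1..k}. \<exists>i2\<in>{1..k}. i1 \<noteq> i2 \<and> c (i1,j) = x \<and> c (i2,j) = x" by blast
    then show ?thesis unfolding w_def by (rule someI_ex)
  qed
  have inh: "inj_on h {1..k}"
  proof (rule inj_onI)
    fix i i' assume i: "i \<in> {1..k}" and i': "i' \<in> {1..k}" and eq: "h i = h i'"
    show "i = i'"
    proof (rule ccontr)
      assume ne: "i \<noteq> i'"
      obtain j1 j2 where a: "j1\<in>{1..k}" "j2\<in>{1..k}" "j1 \<noteq> j2" "c (i,j1) = h i" "c (i,j2) = h i"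
        using h[OF i] by blast
      obtain j1' j2' where b: "j1'\<in>{1..k}" "j2'\<in>{1..k}" "j1' \<noteq> j2'" "c (i',j1') = h i'" "c (i',j2') = h i'"
        using h[OF i'] by blast
      have "j1 = j1'" using sameclass[OF col i a(1) i' b(1)] a b eq ne by simp
      moreover have "j2 = j1'" using sameclass[OF col i a(2) i' b(1)] a b eq ne by simp
      ultimately show False using a(3) by simp
    qed
  qed
  have inw: "inj_on w ({1..k} - {q})"
  proof (rule inj_onI)
    fix j j' assume j: "j \<in> {1..k} - {q}" and j': "j' \<in> {1..k} - {q}" and eq: "w j = w j'"
    show "j = j'"
    proof (rule ccontr)
      assume ne: "j \<noteq> j'"
      obtain i1 i2 where a: "i1\<in>{1..k}" "i2\<in>{1..k}" "i1 \<noteq> i2" "c (i1,j) = w j" "c (i2,j) = w j"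
        using w[of j] j by blast
      obtain i1' i2' where b: "i1'\<in>{1..k}" "i2'\<in>{1..k}" "i1' \<noteq> i2'" "c (i1',j') = w j'" "c (i2',j') = w j'"
        using w[of j'] j' by blast
      have jk: "j \<in> {1..k}" "j' \<in> {1..k}" using j j' by auto
      have "i1 = i1'" using sameclass[OF col a(1) jk(1) b(1) jk(2)] a b eq ne by simp
      moreover have "i2 = i1'" using sameclass[OF col a(2) jk(1) b(1) jk(2)] a b eq ne by simp
      ultimately show False using a(3) by simp
    qed
  qed
  have disj: "h ` {1..k} \<inter> w ` ({1..k} - {q}) = {}"
  proof (rule ccontr)
    assume "h ` {1..k} \<inter> w ` ({1..k} - {q}) \<noteq> {}"
    then obtain x where x: "x \<in> h ` {1..k}" "x \<in> w ` ({1..k} - {q})" by blast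
    from x(1) obtain i where i: "i \<in> {1..k}" and xi: "x = h i" by (rule imageE)
    from x(2) obtain j where j': "j \<in> {1..k} - {q}" and xj: "x = w j" by (rule imageE)
    have j: "j \<in> {1..k}" "j \<noteq> q" using j' by auto
    have eq: "h i = w j" using xi xj by simp
    obtain j1 j2 where a: "j1\<in>{1..k}" "j2\<in>{1..k}" "j1 \<noteq> j2" "c (i,j1) = h i" "c (i,j2) = h i"
      using h[OF i] by blast
    obtain i1 i2 where b: "i1\<in>{1..k}" "i2\<in>{1..k}" "i1 \<noteq> i2" "c (i1,j) = w j" "c (i2,j) = w j"
      using w[OF j] by blast
    have "i = i1 \<or> j1 = j" using sameclass[OF col i a(1) b(1) j(1)] a b eq by simp
    moreover have "i = i1 \<or> j2 = j" using sameclass[OF col i a(2) b(1) j(1)] a b eq by simp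
    moreover have "i = i2 \<or> j1 = j" using sameclass[OF col i a(1) b(2) j(1)] a b eq by simp
    moreover have "i = i2 \<or> j2 = j" using sameclass[OF col i a(2) b(2) j(1)] a b eq by simp
    ultimately show False using a(3) b(3) by auto
  qed
  have sub: "h ` {1..k} \<union> w ` ({1..k} - {q}) \<subseteq> c ` B_V k"
  proof
    fix x assume "x \<in> h ` {1..k} \<union> w ` ({1..k} - {q})"
    then show "x \<in> c ` B_V k"
    proof
      assume "x \<in> h ` {1..k}"
      then obtain i where i: "i \<in> {1..k}" "x = h i" by auto
      obtain j1 j2 where a: "j1\<in>{1..k}" "j2\<in>{1..k}" "j1 \<noteq> j2" "c (i,j1) = h i" "c (i,j2) = h i"
        using h[OF i(1)] by blast
      have "(i,j1) \<in> B_V k" using i a by (simp add: B_V_def)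
      then show ?thesis using a i by (metis image_eqI)
    next
      assume "x \<in> w ` ({1..k} - {q})"
      then obtain j where j': "j \<in> {1..k} - {q}" "x = w j" by (rule imageE)
      have j: "j \<in> {1..k}" "j \<noteq> q" "x = w j" using j' by auto
      obtain i1 i2 where b: "i1\<in>{1..k}" "i2\<in>{1..k}" "i1 \<noteq> i2" "c (i1,j) = w j" "c (i2,j) = w j"
        using w[OF j(1,2)] by blast
      have "(i1,j) \<in> B_V k" using j b by (simp add: B_V_def)
      then show ?thesis using b j by (metis image_eqI)
    qed
  qed
  have fin: "finite (c ` B_V k)" by (simp add: B_V_def)
  have "card (h ` {1..k} \<union> w ` ({1..k} - {q})) = k + (k-1)"
    using card_Un_disjoint[of "h ` {1..k}" "w ` ({1..k} - {q})"] disj card_image[OF inh] card_image[OF inw] q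
    by simp
  then have "k + (k-1) \<le> card (c ` B_V k)" using card_mono[OF fin sub] by simp
  then show ?thesis by simp
qed

lemma ivt_list:
  "xs \<noteq> [] \<Longrightarrow> P (hd xs) \<Longrightarrow> \<not> P (last xs) \<Longrightarrow> \<exists>t. Suc t < length xs \<and> P (xs!t) \<and> \<not> P (xs ! Suc t)"
proof (induction xs)
  case Nil then show ?case by simp
next
  case (Cons x ys)
  show ?case
  proof (cases ys)
    case Nil with Cons show ?thesis by simp
  next
    case (Cons y zs)
    show ?thesis
    proof (cases "P y")
      case True
      with Cons.prems Cons Cons.IH obtain t where "Suc t < length ys" "P (ys!t)" "\<not> P (ys ! Suc t)" by auto
      then show ?thesis by (intro exI[of _ "Suc t"]) auto
    next
      case False
      with Cons.prems Cons show ?thesis by (intro exI[of _ 0]) auto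
    qed
  qed
qed

lemma part1:
  assumes k: "k \<ge> 1" and rs: "recoloring_seq (B_V k) B_E K alphaB betaB xs"
  shows "\<exists>c\<in>set xs. colors_used (B_V k) c \<ge> 2*k - 1"
proof -
  from rs have ne: "xs \<noteq> []" and cols: "\<forall>c\<in>set xs. is_kcoloring (B_V k) B_E K c"
    and hd: "same_coloring (B_V k) (hd xs) alphaB" and lst: "same_coloring (B_V k) (last xs) betaB"
    and steps: "\<forall>i. Suc i < length xs \<longrightarrow> same_coloring (B_V k) (xs!i) (xs!Suc i) \<or> differ_on_one (B_V k) (xs!i) (xs!Suc i)"
    unfolding recoloring_seq_def by auto
  show ?thesis
  proof (cases "k = 1")
    case True
    have "(1,1) \<in> B_V k" using True by (simp add: B_V_def)
    then have "hd xs ` B_V k \<noteq> {}" by blast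
    moreover have "finite (hd xs ` B_V k)" by (simp add: B_V_def)
    ultimately have "card (hd xs ` B_V k) \<ge> 1" by (simp add: Suc_le_eq card_gt_0_iff)
    then show ?thesis using True hd_in_set[OF ne] unfolding colors_used_def by auto
  next
    case False
    hence k2: "k \<ge> 2" using k by simp
    define P where "P c \<longleftrightarrow> (\<forall>i\<in>{1..k}. hrow k c i)" for c :: "nat\<times>nat\<Rightarrow>nat"
    have P0: "P (hd xs)" unfolding P_def
    proof
      fix i assume i: "i \<in> {1..k}"
      have "(i,1) \<in> B_V k" "(i,2) \<in> B_V k" using i k2 by (auto simp: B_V_def)
      then have "hd xs (i,1) = hd xs (i,2)" using hd by (simp add: same_coloring_def alphaB_def)
      then show "hrow k (hd xs) i" unfolding hrow_def using k2 by (intro bexI[of _ 1] bexI[of _ 2]) auto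
    qed
    have P1: "\<not> P (last xs)"
    proof
      assume "P (last xs)"
      then have "hrow k (last xs) 1" using k unfolding P_def by auto
      then obtain j1 j2 where "j1\<in>{1..k}" "j2\<in>{1..k}" "j1 \<noteq> j2" "last xs (1,j1) = last xs (1,j2)"
        unfolding hrow_def by blast
      moreover have "(1,j1) \<in> B_V k" "(1,j2) \<in> B_V k" using calculation k by (auto simp: B_V_def)
      ultimately show False using lst by (simp add: same_coloring_def betaB_def)
    qed
    obtain t where t: "Suc t < length xs" "P (xs!t)" "\<not> P (xs ! Suc t)"
      using ivt_list[of xs P, OF ne P0 P1] by blast
    define c where "c = xs!t"
    define d where "d = xs!Suc t"
    have cc: "is_kcoloring (B_V k) B_E K c" using cols t(1) unfolding c_def by (auto intro: nth_mem)
    have cd: "is_kcoloring (B_V k) B_E K d" using cols t(1) unfolding d_def by (auto intro: nth_mem)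
    have cin: "c \<in> set xs" "d \<in> set xs" using t(1) unfolding c_def d_def by (auto intro: nth_mem)
    obtain i0 where i0: "i0 \<in> {1..k}" "\<not> hrow k d i0" using t(3) unfolding P_def d_def by blast
    show ?thesis
    proof (cases "\<exists>j0\<in>{1..k}. \<not> vcol k d j0")
      case True
      then obtain j0 where "j0 \<in> {1..k}" "\<not> vcol k d j0" by blast
      from L2[OF cd i0(1) this(1) i0(2) this(2)] have "card (d ` B_V k) \<ge> 2*k - 1" .
      then show ?thesis using cin(2) unfolding colors_used_def by blast
    next
      case False
      hence allv: "\<forall>j\<in>{1..k}. vcol k d j" by blast
      from steps t(1) have "same_coloring (B_V k) c d \<or> differ_on_one (B_V k) c d"
        unfolding c_def d_def by blast
      then show ?thesis
      proof
        assume s: "same_coloring (B_V k) c d"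
        have "hrow k c i0 = hrow k d i0" using s i0 unfolding hrow_def same_coloring_def B_V_def by auto
        moreover have "hrow k c i0" using t(2) i0(1) unfolding P_def c_def by blast
        ultimately show ?thesis using i0(2) by simp
      next
        assume "differ_on_one (B_V k) c d"
        then obtain p q where pq: "(p,q) \<in> B_V k" "\<forall>v\<in>B_V k. c v \<noteq> d v \<longrightarrow> v = (p,q)"
          unfolding differ_on_one_def by auto
        have q: "q \<in> {1..k}" using pq by (auto simp: B_V_def)
        have "\<forall>j\<in>{1..k}. j \<noteq> q \<longrightarrow> vcol k c j"
        proof (intro ballI impI)
          fix j assume j: "j \<in> {1..k}" "j \<noteq> q"
          then obtain i1 i2 where a: "i1\<in>{1..k}" "i2\<in>{1..k}" "i1 \<noteq> i2" "d (i1,j) = d (i2,j)"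
            using allv unfolding vcol_def by blast
          have m: "(i1,j) \<in> B_V k" "(i2,j) \<in> B_V k" using a j by (auto simp: B_V_def)
          have "c (i1,j) = d (i1,j)" using pq(2) m(1) j(2) by blast
          moreover have "c (i2,j) = d (i2,j)" using pq(2) m(2) j(2) by blast
          ultimately show "vcol k c j" unfolding vcol_def using a(1,2,3) by (metis a(4))
        qed
        moreover have "\<forall>i\<in>{1..k}. hrow k c i" using t(2) unfolding P_def c_def by blast
        ultimately have "card (c ` B_V k) \<ge> 2*k - 1" using L1[OF cc q] by blast
        then show ?thesis using cin(1) unfolding colors_used_def by blast
      qed
    qed
  qed
qed


definition upd :: "(nat\<times>nat \<Rightarrow> nat) \<Rightarrow> (nat\<times>nat) \<times> nat \<Rightarrow> (nat\<times>nat \<Rightarrow> nat)" where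
  "upd c p = c(fst p := snd p)"
definition mix :: "(nat\<times>nat) set \<Rightarrow> (nat\<times>nat \<Rightarrow> nat) \<Rightarrow> (nat\<times>nat \<Rightarrow> nat) \<Rightarrow> (nat\<times>nat \<Rightarrow> nat)" where
  "mix X g c = (\<lambda>v. if v \<in> X then g v else c v)"

lemma foldl_upd_map: "foldl upd c (map (\<lambda>v. (v, g v)) vs) = mix (set vs) g c"
  by (induction vs arbitrary: c) (auto simp: upd_def mix_def fun_eq_iff)

lemma mix_empty[simp]: "mix {} g c = c" by (simp add: mix_def)

definition vs1 :: "nat \<Rightarrow> (nat\<times>nat) list" where "vs1 k = List.product [2..<k+1] [1..<k+1]"
definition vs2 :: "nat \<Rightarrow> (nat\<times>nat) list" where "vs2 k = List.product [1..<k+1] [2..<k+1]"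
definition vs3 :: "nat \<Rightarrow> (nat\<times>nat) list" where "vs3 k = List.product [2..<k+1] [1]"
definition g1 :: "nat \<Rightarrow> nat\<times>nat \<Rightarrow> nat" where "g1 k v = (if fst v = 1 then 1 else k + fst v - 1)"
definition c1 :: "nat \<Rightarrow> nat\<times>nat \<Rightarrow> nat" where "c1 k = mix (set (vs1 k)) (g1 k) alphaB"
definition g2 :: "nat \<Rightarrow> nat\<times>nat \<Rightarrow> nat" where "g2 k v = (if snd v \<ge> 2 then snd v else c1 k v)"
definition c2 :: "nat \<Rightarrow> nat\<times>nat \<Rightarrow> nat" where "c2 k = mix (set (vs2 k)) (g2 k) (c1 k)"
definition us :: "nat \<Rightarrow> ((nat\<times>nat) \<times> nat) list" where
  "us k = map (\<lambda>v. (v, g1 k v)) (vs1 k) @ map (\<lambda>v. (v, g2 k v)) (vs2 k) @ map (\<lambda>v. (v, betaB v)) (vs3 k)"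
definition st :: "nat \<Rightarrow> nat \<Rightarrow> nat\<times>nat \<Rightarrow> nat" where "st k t = foldl upd alphaB (take t (us k))"
definition xsB :: "nat \<Rightarrow> (nat\<times>nat \<Rightarrow> nat) list" where "xsB k = map (st k) [0..<length (us k) + 1]"

definition inv :: "nat \<Rightarrow> (nat \<Rightarrow> nat set) \<Rightarrow> (nat \<Rightarrow> nat set) \<Rightarrow> (nat\<times>nat \<Rightarrow> nat) \<Rightarrow> bool" where
  "inv k A S c \<longleftrightarrow> (\<forall>i\<in>{1..k}. \<forall>j\<in>{1..k}. c (i,j) \<in> A i \<union> S j \<and> c (i,j) \<in> {1..2*k-1})"

lemma inv_col:
  assumes "inv k A S c" "\<forall>i\<in>{1..k}. \<forall>i'\<in>{1..k}. i\<noteq>i' \<longrightarrow> A i \<inter> A i' = {}"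
    "\<forall>j\<in>{1..k}. \<forall>j'\<in>{1..k}. j\<noteq>j' \<longrightarrow> S j \<inter> S j' = {}" "\<forall>i\<in>{1..k}. \<forall>j\<in>{1..k}. A i \<inter> S j = {}"
  shows "is_kcoloring (B_V k) B_E (2*k-1) c"
  unfolding is_kcoloring_def
proof (intro conjI ballI impI)
  fix v assume "v \<in> B_V k" then show "c v \<in> {1..2*k-1}" using assms(1) by (auto simp: inv_def B_V_def)
next
  fix u v assume u: "u \<in> B_V k" and v: "v \<in> B_V k" and e: "B_E u v"
  obtain i j i' j' where uv: "u = (i,j)" "v = (i',j')" by (cases u, cases v) auto
  have r: "i \<in> {1..k}" "j \<in> {1..k}" "i' \<in> {1..k}" "j' \<in> {1..k}" "i \<noteq> i'" "j \<noteq> j'"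
    using u v e uv by (auto simp: B_V_def B_E_def)
  have a: "c (i,j) \<in> A i \<union> S j" "c (i',j') \<in> A i' \<union> S j'" using assms(1) r by (auto simp: inv_def)
  show "c u \<noteq> c v"
  proof
    assume eq: "c u = c v"
    have d1: "A i \<inter> A i' = {}" "S j \<inter> S j' = {}" "A i \<inter> S j' = {}" "A i' \<inter> S j = {}"
      using assms(2-4) r by auto
    show False using a eq uv d1 by auto
  qed
qed

lemma inv_mix: "inv k A S c \<Longrightarrow> inv k A S g \<Longrightarrow> inv k A S (mix X g c)"
  by (auto simp: inv_def mix_def)

definition A1 :: "nat \<Rightarrow> nat \<Rightarrow> nat set" where "A1 k i = (if i = 1 then {1} else {i, k+i-1})"
definition A2 :: "nat \<Rightarrow> nat \<Rightarrow> nat set" where "A2 k i = {if i = 1 then 1 else k+i-1}"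
definition S2 :: "nat \<Rightarrow> nat set" where "S2 j = (if j \<ge> 2 then {j} else {})"
definition A3 :: "nat \<Rightarrow> nat \<Rightarrow> nat set" where "A3 k i = (if i \<ge> 2 then {k+i-1} else {})"
definition S3 :: "nat \<Rightarrow> nat set" where "S3 j = {j}"

lemma c1_val: "i\<in>{1..k} \<Longrightarrow> j\<in>{1..k} \<Longrightarrow> c1 k (i,j) = (if i = 1 then 1 else k+i-1)"
  by (auto simp: c1_def mix_def vs1_def g1_def alphaB_def)

lemma c2_val: "i\<in>{1..k} \<Longrightarrow> j\<in>{1..k} \<Longrightarrow> c2 k (i,j) = (if j \<ge> 2 then j else if i = 1 then 1 else k+i-1)"
  by (auto simp: c2_def mix_def vs2_def g2_def c1_val)

lemma proper1: "k \<ge> 1 \<Longrightarrow> is_kcoloring (B_V k) B_E (2*k-1) (mix X (g1 k) alphaB)"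
  apply (rule inv_col[where A="A1 k" and S="\<lambda>_. {}"])
     apply (rule inv_mix)
      apply (auto simp: inv_def A1_def alphaB_def g1_def)
  done

lemma proper2: "k \<ge> 1 \<Longrightarrow> is_kcoloring (B_V k) B_E (2*k-1) (mix X (g2 k) (c1 k))"
  apply (rule inv_col[where A="A2 k" and S="S2"])
     apply (rule inv_mix)
      apply (auto simp: inv_def A2_def S2_def g2_def c1_val)
  done

lemma proper3: "k \<ge> 1 \<Longrightarrow> is_kcoloring (B_V k) B_E (2*k-1) (mix X betaB (c2 k))"
  apply (rule inv_col[where A="A3 k" and S="S3"])
     apply (rule inv_mix)
      apply (auto simp: inv_def A3_def S3_def betaB_def c2_val)
  done

lemma st_eq: "st k t = mix (set (take (t - length (vs1 k) - length (vs2 k)) (vs3 k))) betaB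
   (mix (set (take (t - length (vs1 k)) (vs2 k))) (g2 k) (mix (set (take t (vs1 k))) (g1 k) alphaB))"
  by (simp add: st_def us_def take_append foldl_upd_map take_map)

lemma st_proper: "k \<ge> 1 \<Longrightarrow> is_kcoloring (B_V k) B_E (2*k-1) (st k t)"
proof -
  assume k: "k \<ge> 1"
  consider "t \<le> length (vs1 k)" | "length (vs1 k) < t" "t \<le> length (vs1 k) + length (vs2 k)"
    | "length (vs1 k) + length (vs2 k) < t" by linarith
  then show ?thesis
  proof cases
    case 1 then show ?thesis using proper1[OF k] by (simp add: st_eq)
  next
    case 2 then show ?thesis using proper2[OF k] by (simp add: st_eq c1_def)
  next
    case 3 then show ?thesis using proper3[OF k] by (simp add: st_eq c1_def c2_def)
  qed
qed

lemma step_ok: "w \<in> V \<Longrightarrow> same_coloring V c (c(w:=x)) \<or> differ_on_one V c (c(w:=x))"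
  by (cases "c w = x") (auto simp: same_coloring_def differ_on_one_def)

lemma us_fst: "p \<in> set (us k) \<Longrightarrow> fst p \<in> B_V k"
  by (auto simp: us_def vs1_def vs2_def vs3_def B_V_def)

lemma part2:
  assumes k: "k \<ge> 1"
  shows "recoloring_seq (B_V k) B_E (2 * k - 1) alphaB betaB (xsB k) \<and> length (xsB k) - 1 \<le> 2 * k ^ 2"
proof -
  have len: "length (xsB k) - 1 = length (us k)" by (simp add: xsB_def)
  obtain m where m: "k = Suc m" using k by (cases k) auto
  have "length (us k) = m*(Suc m) + (Suc m)*m + m" 
  proof -
    have a: "length [2..<k+1] = m" "length [1..<k+1] = Suc m" "length [Suc 0] = 1" unfolding length_upt using m by simp_all
    show ?thesis unfolding us_def vs1_def vs2_def vs3_def length_append length_map length_product a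
      by simp
  qed
  also have "\<dots> \<le> 2*k^2" by (simp add: m power2_eq_square algebra_simps)
  finally have L: "length (xsB k) - 1 \<le> 2 * k ^ 2" using len by simp
  have cols: "\<forall>c\<in>set (xsB k). is_kcoloring (B_V k) B_E (2*k-1) c"
    using st_proper[OF k] by (auto simp: xsB_def)
  have hd: "same_coloring (B_V k) (hd (xsB k)) alphaB"
  proof -
    have "hd (xsB k) = st k 0" by (simp add: xsB_def hd_map upt_conv_Cons del: upt_Suc)
    then show ?thesis by (simp add: st_def same_coloring_def)
  qed
  have fin: "st k (length (us k)) = mix (set (vs3 k)) betaB (c2 k)"
    by (simp add: st_eq c1_def c2_def us_def)
  have lst: "same_coloring (B_V k) (last (xsB k)) betaB"
    unfolding xsB_def same_coloring_def
  proof
    fix v assume v: "v \<in> B_V k"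
    obtain i j where ij: "v = (i,j)" by (cases v)
    have "last (map (st k) [0..<length (us k) + 1]) = st k (length (us k))"
      by (simp add: last_map)
    moreover have "mix (set (vs3 k)) betaB (c2 k) (i,j) = betaB (i,j)"
      using v ij by (auto simp: mix_def vs3_def c2_val B_V_def betaB_def)
    ultimately show "last (map (st k) [0..<length (us k) + 1]) v = betaB v" using fin ij by simp
  qed
  have steps: "\<forall>i. Suc i < length (xsB k) \<longrightarrow>
        same_coloring (B_V k) (xsB k ! i) (xsB k ! Suc i) \<or> differ_on_one (B_V k) (xsB k ! i) (xsB k ! Suc i)"
  proof (intro allI impI)
    fix i assume i: "Suc i < length (xsB k)"
    hence il: "i < length (us k)" by (simp add: xsB_def)
    have e1: "xsB k ! i = st k i" "xsB k ! Suc i = st k (Suc i)" using il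
      by (simp_all add: xsB_def nth_append del: upt_Suc)
    have "st k (Suc i) = (st k i)(fst (us k ! i) := snd (us k ! i))"
      using il by (simp add: st_def take_Suc_conv_app_nth upd_def)
    moreover have "fst (us k ! i) \<in> B_V k" using il by (intro us_fst) simp
    ultimately show "same_coloring (B_V k) (xsB k ! i) (xsB k ! Suc i) \<or> differ_on_one (B_V k) (xsB k ! i) (xsB k ! Suc i)"
      using step_ok e1 by metis
  qed
  have ne: "xsB k \<noteq> []" by (simp add: xsB_def)
  show ?thesis using L cols hd lst steps ne unfolding recoloring_seq_def by blast
qed


theorem mainTheorem1:
  fixes k :: nat
  assumes "k \<ge> 1"
  shows "(\<forall>k' xs. recoloring_seq (B_V k) B_E k' alphaB betaB xs \<longrightarrow>
            (\<exists>c\<in>set xs. colors_used (B_V k) c \<ge> 2 * k - 1))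
       \<and> (\<exists>xs. recoloring_seq (B_V k) B_E (2 * k - 1) alphaB betaB xs \<and>
            length xs - 1 \<le> 2 * k ^ 2)"
proof (rule conjI)
  show "\<forall>k' xs. recoloring_seq (B_V k) B_E k' alphaB betaB xs \<longrightarrow>
            (\<exists>c\<in>set xs. colors_used (B_V k) c \<ge> 2 * k - 1)"
    using part1[OF assms] by blast
  show "\<exists>xs. recoloring_seq (B_V k) B_E (2 * k - 1) alphaB betaB xs \<and>
            length xs - 1 \<le> 2 * k ^ 2"
    using part2[OF assms] by (rule exI)
qed

end
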